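(* Let $(I_n)_{n\ge1}$ be pairwise disjoint intervals in $\mathcal{R}$ with $\lim_{n\to\infty}l(I_n)=0$, and let $A,B\subseteq\mathcal{R}$ be outer measurable with $A\subseteq\bigcup_{n=1}^\infty I_n$ and $B\subseteq\mathcal{R}\setminus\bigcup_{n=1}^\infty I_n$. Then $A\cup B$ is outer measurable and $M_u(A\cup B)=M_u(A)+M_u(B)$.
   Context: $\mathcal{R}$ denotes the Levi-Civita field: functions $x:\mathbb{Q}\to\mathbb{R}$ with left-finite support, with componentwise addition and formal power series multiplication, ordered by $x>0$ iff $x\ne0$ and $x[\min\operatorname{supp}x]>0$; it is a non-Archimedean ordered field extension of $\mathbb{R}$, Cauchy complete in the order topology, in which all limits and series are taken (a series $\sum a_n$ converges iff $a_n\to0$). An interval is a set $[a,b],[a,b),(a,b]$ or $(a,b)$ with $a<b$ in $\mathcal{R}$, of length $l=b-a$. A cover of $A\subseteq\mathcal{R}$ is a sequence of intervals $(S_n)_{n\ge1}$ with $A\subseteq\bigcup_n S_n$ and $\sum_n l(S_n)$ convergent in $\mathcal{R}$. $A$ is called outer measurable if the infimum $\inf\{\sum_n l(S_n): (S_n)\text{ a cover of }A\}$ exists in $\mathcal{R}$; this infimum is then called the outer measure $M_u(A)$. *)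

theory Defs
  imports Complex_Main
begin

section \<open>The Levi-Civita field (carrier and the operations used)\<close>

typedef lc = "{x :: rat \<Rightarrow> real. \<forall>q. finite {p. p < q \<and> x p \<noteq> 0}}"
  by (rule exI[of _ "\<lambda>_. 0"]) auto

instantiation lc :: "{zero, plus, uminus, minus, times}"
begin
definition zero_lc_def: "0 = Abs_lc (\<lambda>_. 0)"
definition plus_lc_def: "x + y = Abs_lc (\<lambda>q. Rep_lc x q + Rep_lc y q)"
definition uminus_lc_def: "- x = Abs_lc (\<lambda>q. - Rep_lc x q)"
definition minus_lc_def: "x - y = Abs_lc (\<lambda>q. Rep_lc x q - Rep_lc y q)"
definition times_lc_def: "x * y = Abs_lc (\<lambda>q.
   \<Sum>p\<in>{p. Rep_lc x p \<noteq> 0 \<and> Rep_lc y (q - p) \<noteq> 0}. Rep_lc x p * Rep_lc y (q - p))"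
instance ..
end

definition lc_pos :: "lc \<Rightarrow> bool" where
  "lc_pos x \<longleftrightarrow> x \<noteq> 0 \<and> (\<exists>q. Rep_lc x q > 0 \<and> (\<forall>p<q. Rep_lc x p = 0))"

instantiation lc :: ord
begin
definition less_lc_def: "x < y \<longleftrightarrow> lc_pos (y - x)"
definition less_eq_lc_def: "x \<le> (y::lc) \<longleftrightarrow> x = y \<or> x < y"
instance ..
end

definition lc_tendsto :: "(nat \<Rightarrow> lc) \<Rightarrow> lc \<Rightarrow> bool" where
  "lc_tendsto f L \<longleftrightarrow> (\<forall>a b. a < L \<and> L < b \<longrightarrow> (\<exists>N. \<forall>n\<ge>N. a < f n \<and> f n < b))"

primrec lc_psum :: "(nat \<Rightarrow> lc) \<Rightarrow> nat \<Rightarrow> lc" where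
  "lc_psum a 0 = 0"
| "lc_psum a (Suc n) = lc_psum a n + a n"

definition lc_sums :: "(nat \<Rightarrow> lc) \<Rightarrow> lc \<Rightarrow> bool" where
  "lc_sums a s \<longleftrightarrow> lc_tendsto (lc_psum a) s"

definition lc_interval :: "lc \<Rightarrow> lc \<Rightarrow> lc set \<Rightarrow> bool" where
  "lc_interval a b S \<longleftrightarrow> a < b \<and>
     (S = {x. a \<le> x \<and> x \<le> b} \<or> S = {x. a \<le> x \<and> x < b} \<or>
      S = {x. a < x \<and> x \<le> b} \<or> S = {x. a < x \<and> x < b})"

definition is_lc_interval :: "lc set \<Rightarrow> bool" where
  "is_lc_interval S \<longleftrightarrow> (\<exists>a b. lc_interval a b S)"

definition lc_len :: "lc set \<Rightarrow> lc" where
  "lc_len S = (THE l. \<exists>a b. lc_interval a b S \<and> l = b - a)"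

text \<open>Covers are indexed by nat (starting at 0 instead of 1).\<close>
definition lc_cover :: "lc set \<Rightarrow> (nat \<Rightarrow> lc set) \<Rightarrow> bool" where
  "lc_cover A S \<longleftrightarrow> (\<forall>n. is_lc_interval (S n)) \<and> A \<subseteq> (\<Union>n. S n) \<and>
     (\<exists>s. lc_sums (\<lambda>n. lc_len (S n)) s)"

definition cover_sums :: "lc set \<Rightarrow> lc set" where
  "cover_sums A = {s. \<exists>S. lc_cover A S \<and> lc_sums (\<lambda>n. lc_len (S n)) s}"

definition lc_is_inf :: "lc set \<Rightarrow> lc \<Rightarrow> bool" where
  "lc_is_inf X m \<longleftrightarrow> (\<forall>x\<in>X. m \<le> x) \<and> (\<forall>m'. (\<forall>x\<in>X. m' \<le> x) \<longrightarrow> m' \<le> m)"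

definition outer_measurable :: "lc set \<Rightarrow> bool" where
  "outer_measurable A \<longleftrightarrow> (\<exists>m. lc_is_inf (cover_sums A) m)"

definition Mu :: "lc set \<Rightarrow> lc" where
  "Mu A = (THE m. lc_is_inf (cover_sums A) m)"

end

theory Submission
  imports Defs "HOL-Library.Nat_Bijection"
begin

definition LF :: "(rat \<Rightarrow> real) \<Rightarrow> bool" where
  "LF x \<longleftrightarrow> (\<forall>q. finite {p. p < q \<and> x p \<noteq> 0})"

lemma LF_Rep: "LF (Rep_lc x)" using Rep_lc[of x] by (simp add: LF_def)
lemma Rep_Abs: "LF f \<Longrightarrow> Rep_lc (Abs_lc f) = f" by (simp add: Abs_lc_inverse LF_def)

lemma LF_add: "LF f \<Longrightarrow> LF g \<Longrightarrow> LF (\<lambda>q. f q + g q)"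
  unfolding LF_def
proof (intro allI)
  fix q assume "\<forall>q. finite {p. p < q \<and> f p \<noteq> 0}" "\<forall>q. finite {p. p < q \<and> g p \<noteq> 0}"
  then have "finite ({p. p < q \<and> f p \<noteq> 0} \<union> {p. p < q \<and> g p \<noteq> 0})" by auto
  then show "finite {p. p < q \<and> f p + g p \<noteq> 0}" by (rule finite_subset[rotated]) auto
qed

lemma LF_scale: "LF f \<Longrightarrow> LF (\<lambda>q. c * f q)"
  unfolding LF_def by (auto elim: finite_subset[rotated])

lemma LF_neg: "LF f \<Longrightarrow> LF (\<lambda>q. - f q)"
  using LF_scale[of f "-1"] by simp

lemma LF_diff: "LF f \<Longrightarrow> LF g \<Longrightarrow> LF (\<lambda>q. f q - g q)"
  using LF_add[of f "\<lambda>q. - g q"] LF_neg[of g] by simp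

lemma LF_zero: "LF (\<lambda>_. 0)" by (simp add: LF_def)

lemma Rep_zero: "Rep_lc 0 q = 0"
  by (simp add: zero_lc_def Rep_Abs LF_zero)
lemma Rep_plus: "Rep_lc (x + y) q = Rep_lc x q + Rep_lc y q"
  by (simp add: plus_lc_def Rep_Abs LF_add LF_Rep)
lemma Rep_uminus: "Rep_lc (- x) q = - Rep_lc x q"
  by (simp add: uminus_lc_def Rep_Abs LF_neg LF_Rep)
lemma Rep_minus: "Rep_lc (x - y) q = Rep_lc x q - Rep_lc y q"
  by (simp add: minus_lc_def Rep_Abs LF_diff LF_Rep)

lemma lc_eq: "(\<And>q. Rep_lc x q = Rep_lc y q) \<Longrightarrow> x = y"
  by (metis Rep_lc_inject ext)

instance lc :: ab_group_add
proof
  fix a b c :: lc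
  show "a + b + c = a + (b + c)" by (rule lc_eq) (simp add: Rep_plus)
  show "a + b = b + a" by (rule lc_eq) (simp add: Rep_plus)
  show "0 + a = a" by (rule lc_eq) (simp add: Rep_plus Rep_zero)
  show "- a + a = 0" by (rule lc_eq) (simp add: Rep_plus Rep_zero Rep_uminus)
  show "a - b = a + - b" by (rule lc_eq) (simp add: Rep_plus Rep_minus Rep_uminus)
qed

lemma Rep_sum: "Rep_lc (sum f F) q = (\<Sum>i\<in>F. Rep_lc (f i) q)"
  by (induction F rule: infinite_finite_induct) (auto simp: Rep_zero Rep_plus)

lemma lc_pos_iff: "lc_pos x \<longleftrightarrow> (\<exists>q. Rep_lc x q > 0 \<and> (\<forall>p<q. Rep_lc x p = 0))"
  unfolding lc_pos_def by (auto simp: Rep_zero)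

lemma lc_nonzero: "x \<noteq> 0 \<Longrightarrow> \<exists>q. Rep_lc x q \<noteq> 0"
  using lc_eq[of x 0] by (auto simp: Rep_zero)

lemma lead_exists:
  assumes "x \<noteq> 0" shows "\<exists>m. Rep_lc x m \<noteq> 0 \<and> (\<forall>p<m. Rep_lc x p = 0)"
proof -
  obtain q0 where q0: "Rep_lc x q0 \<noteq> 0" using lc_nonzero[OF assms] by blast
  define S where "S = {p. p < q0 + 1 \<and> Rep_lc x p \<noteq> 0}"
  have fin: "finite S" using LF_Rep[of x] by (simp add: LF_def S_def)
  have inS: "q0 \<in> S" using q0 by (simp add: S_def)
  define m where "m = Min S"
  have "m \<in> S" using Min_in[OF fin] inS unfolding m_def by blast
  moreover have "\<forall>p<m. Rep_lc x p = 0"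
  proof (intro allI impI)
    fix p assume "p < m"
    show "Rep_lc x p = 0"
    proof (rule ccontr)
      assume "Rep_lc x p \<noteq> 0"
      moreover have "m \<le> q0" using fin inS by (simp add: m_def)
      ultimately have "p \<in> S" using \<open>p < m\<close> by (simp add: S_def)
      then have "m \<le> p" using fin by (simp add: m_def)
      then show False using \<open>p < m\<close> by simp
    qed
  qed
  ultimately show ?thesis by (auto simp: S_def)
qed

lemma pos_or_neg: assumes "x \<noteq> 0" shows "lc_pos x \<or> lc_pos (- x)"
proof -
  obtain m where m: "Rep_lc x m \<noteq> 0" "\<forall>p<m. Rep_lc x p = 0" using lead_exists[OF assms] by blast
  show ?thesis
  proof (cases "Rep_lc x m > 0")
    case True then show ?thesis using m unfolding lc_pos_iff by blast
  next
    case False then have "Rep_lc (- x) m > 0" using m(1) by (simp add: Rep_uminus)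
    then show ?thesis using m(2) unfolding lc_pos_iff by (auto simp: Rep_uminus)
  qed
qed

lemma not_pos_both: assumes "lc_pos x" shows "\<not> lc_pos (- x)"
proof
  assume "lc_pos (- x)"
  then obtain q2 where q2: "Rep_lc x q2 < 0" "\<forall>p<q2. Rep_lc x p = 0"
    unfolding lc_pos_iff by (auto simp: Rep_uminus)
  obtain q1 where q1: "Rep_lc x q1 > 0" "\<forall>p<q1. Rep_lc x p = 0" using assms lc_pos_iff by blast
  show False
  proof (cases q1 q2 rule: linorder_cases)
    case less then show ?thesis using q1 q2 by force
  next
    case equal then show ?thesis using q1 q2 by force
  next
    case greater then show ?thesis using q1 q2 by force
  qed
qed

lemma not_pos_zero: "\<not> lc_pos 0"
  by (simp add: lc_pos_def)

lemma pos_add: assumes "lc_pos x" "lc_pos y" shows "lc_pos (x + y)"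
proof -
  obtain q1 where q1: "Rep_lc x q1 > 0" "\<forall>p<q1. Rep_lc x p = 0" using assms(1) lc_pos_iff by blast
  obtain q2 where q2: "Rep_lc y q2 > 0" "\<forall>p<q2. Rep_lc y p = 0" using assms(2) lc_pos_iff by blast
  show ?thesis unfolding lc_pos_iff Rep_plus
  proof (cases q1 q2 rule: linorder_cases)
    case less then show "\<exists>q. 0 < Rep_lc x q + Rep_lc y q \<and> (\<forall>p<q. Rep_lc x p + Rep_lc y p = 0)"
      using q1 q2 by (intro exI[of _ q1]) auto
  next
    case equal then show "\<exists>q. 0 < Rep_lc x q + Rep_lc y q \<and> (\<forall>p<q. Rep_lc x p + Rep_lc y p = 0)"
      using q1 q2 by (intro exI[of _ q1]) auto
  next
    case greater then show "\<exists>q. 0 < Rep_lc x q + Rep_lc y q \<and> (\<forall>p<q. Rep_lc x p + Rep_lc y p = 0)"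
      using q1 q2 by (intro exI[of _ q2]) auto
  qed
qed

instance lc :: linorder
proof
  fix x y z :: lc
  show "(x < y) = (x \<le> y \<and> \<not> y \<le> x)"
    unfolding less_lc_def less_eq_lc_def
    by (metis minus_diff_eq not_pos_both not_pos_zero right_minus_eq)
  show "x \<le> x" by (simp add: less_eq_lc_def)
  show "x \<le> y \<Longrightarrow> y \<le> z \<Longrightarrow> x \<le> z"
    unfolding less_lc_def less_eq_lc_def
    by (metis diff_add_cancel add_diff_eq pos_add add.commute diff_diff_eq2)
  show "x \<le> y \<Longrightarrow> y \<le> x \<Longrightarrow> x = y"
    unfolding less_lc_def less_eq_lc_def
    by (metis minus_diff_eq not_pos_both)
  show "x \<le> y \<or> y \<le> x"
    unfolding less_lc_def less_eq_lc_def
    by (metis minus_diff_eq pos_or_neg right_minus_eq)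
qed

instance lc :: ordered_ab_group_add
proof
  fix a b c :: lc
  assume "a \<le> b"
  moreover have "c + b - (c + a) = b - a" by (simp add: algebra_simps)
  ultimately show "c + a \<le> c + b"
    unfolding less_lc_def less_eq_lc_def by auto
qed

instance lc :: linordered_ab_group_add ..

lemma pos_gt0: "0 < x \<longleftrightarrow> lc_pos x" by (simp add: less_lc_def)

definition vb :: "lc \<Rightarrow> rat \<Rightarrow> bool" where
  "vb x q \<longleftrightarrow> (\<forall>p<q. Rep_lc x p = 0)"

lemma lead_pos: "0 < z \<Longrightarrow> \<exists>m. Rep_lc z m > 0 \<and> vb z m"
  by (simp add: pos_gt0 lc_pos_iff vb_def)

lemma lead_coeff_pos:
  assumes "0 < w" "vb w m" "Rep_lc w m \<noteq> 0" shows "Rep_lc w m > 0"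
proof -
  obtain q where q: "Rep_lc w q > 0" "vb w q" using lead_pos[OF assms(1)] by blast
  have "q = m"
  proof (rule ccontr)
    assume "q \<noteq> m"
    then have "q < m \<or> m < q" by auto
    then show False using q assms(2,3) unfolding vb_def by force
  qed
  then show ?thesis using q by simp
qed

lemma agree_pos:
  assumes "0 < z" shows "\<exists>q. \<forall>w. (\<forall>p<q. Rep_lc w p = Rep_lc z p) \<longrightarrow> 0 < w"
proof -
  obtain m where m: "Rep_lc z m > 0" "vb z m" using lead_pos[OF assms] by blast
  show ?thesis
  proof (intro exI allI impI)
    fix w assume h: "\<forall>p<m+1. Rep_lc w p = Rep_lc z p"
    have "Rep_lc w m > 0" using h m by auto
    moreover have "\<forall>p<m. Rep_lc w p = 0" using h m(2) unfolding vb_def by auto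
    ultimately show "0 < w" unfolding pos_gt0 lc_pos_iff by blast
  qed
qed

definition mono_lc :: "real \<Rightarrow> rat \<Rightarrow> lc" where
  "mono_lc r q = Abs_lc (\<lambda>p. if p = q then r else 0)"

lemma LF_mono: "LF (\<lambda>p. if p = q then r else 0)"
  unfolding LF_def by (auto intro: finite_subset[of _ "{q}"])

lemma Rep_mono: "Rep_lc (mono_lc r q) p = (if p = q then r else 0)"
  by (simp add: mono_lc_def Rep_Abs LF_mono)

lemma mono_pos: "r > 0 \<Longrightarrow> 0 < mono_lc r q"
  unfolding pos_gt0 lc_pos_iff Rep_mono by (intro exI[of _ q]) auto

lemma small_vb:
  assumes "- mono_lc 1 q < z" "z < mono_lc 1 q" shows "vb z q"
proof (rule ccontr)
  assume "\<not> vb z q"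
  then have "z \<noteq> 0" by (auto simp: vb_def Rep_zero)
  then obtain m where m: "Rep_lc z m \<noteq> 0" "\<forall>p<m. Rep_lc z p = 0" using lead_exists by blast
  have "m < q"
  proof (rule ccontr)
    assume "\<not> m < q"
    then have "vb z q" using m(2) by (auto simp: vb_def)
    then show False using \<open>\<not> vb z q\<close> by simp
  qed
  have 1: "0 < mono_lc 1 q - z" using assms(2) by simp
  have 2: "0 < z + mono_lc 1 q" using assms(1) diff_gt_0_iff_gt[of z "- mono_lc 1 q"] by simp
  have "vb (mono_lc 1 q - z) m" using m(2) \<open>m < q\<close> by (auto simp: vb_def Rep_minus Rep_mono)
  moreover have "Rep_lc (mono_lc 1 q - z) m = - Rep_lc z m" using \<open>m < q\<close> by (simp add: Rep_minus Rep_mono)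
  ultimately have a: "- Rep_lc z m > 0" using lead_coeff_pos[OF 1] m(1) by fastforce
  have "vb (z + mono_lc 1 q) m" using m(2) \<open>m < q\<close> by (auto simp: vb_def Rep_plus Rep_mono)
  moreover have "Rep_lc (z + mono_lc 1 q) m = Rep_lc z m" using \<open>m < q\<close> by (simp add: Rep_plus Rep_mono)
  ultimately have b: "Rep_lc z m > 0" using lead_coeff_pos[OF 2] m(1) by fastforce
  show False using a b by simp
qed

lemma vb_add: "vb x q \<Longrightarrow> vb y q \<Longrightarrow> vb (x + y) q" by (simp add: vb_def Rep_plus)
lemma vb_diff: "vb x q \<Longrightarrow> vb y q \<Longrightarrow> vb (x - y) q" by (simp add: vb_def Rep_minus)
lemma vb_uminus: "vb x q \<Longrightarrow> vb (- x) q" by (simp add: vb_def Rep_uminus)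
lemma vb_zero: "vb 0 q" by (simp add: vb_def Rep_zero)
lemma vb_sum: "(\<And>i. i \<in> F \<Longrightarrow> vb (f i) q) \<Longrightarrow> vb (sum f F) q"
  by (simp add: vb_def Rep_sum)
lemma vb_all_eq0: "(\<And>q. vb x q) \<Longrightarrow> x = 0"
  by (rule lc_eq) (metis Rep_zero less_add_one vb_def)

lemma tendsto_iff: "lc_tendsto f L \<longleftrightarrow> (\<forall>q. \<exists>N. \<forall>n\<ge>N. vb (f n - L) q)"
proof
  assume h: "lc_tendsto f L"
  show "\<forall>q. \<exists>N. \<forall>n\<ge>N. vb (f n - L) q"
  proof
    fix q
    have e: "0 < mono_lc 1 q" by (rule mono_pos) simp
    have "L - mono_lc 1 q < L" "L < L + mono_lc 1 q" using e by simp_all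
    then obtain N where N: "\<forall>n\<ge>N. L - mono_lc 1 q < f n \<and> f n < L + mono_lc 1 q"
      using h unfolding lc_tendsto_def by blast
    show "\<exists>N. \<forall>n\<ge>N. vb (f n - L) q"
    proof (intro exI allI impI)
      fix n assume "n \<ge> N"
      then have "L - mono_lc 1 q < f n" "f n < L + mono_lc 1 q" using N by auto
      then show "vb (f n - L) q" by (intro small_vb) (simp_all add: algebra_simps)
    qed
  qed
next
  assume h: "\<forall>q. \<exists>N. \<forall>n\<ge>N. vb (f n - L) q"
  show "lc_tendsto f L" unfolding lc_tendsto_def
  proof (intro allI impI)
    fix a b assume ab: "a < L \<and> L < b"
    obtain qa where qa: "\<forall>w. (\<forall>p<qa. Rep_lc w p = Rep_lc (L - a) p) \<longrightarrow> 0 < w"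
      using agree_pos[of "L - a"] ab by auto
    obtain qb where qb: "\<forall>w. (\<forall>p<qb. Rep_lc w p = Rep_lc (b - L) p) \<longrightarrow> 0 < w"
      using agree_pos[of "b - L"] ab by auto
    obtain N where N: "\<forall>n\<ge>N. vb (f n - L) (max qa qb)" using h by blast
    show "\<exists>N. \<forall>n\<ge>N. a < f n \<and> f n < b"
    proof (intro exI allI impI)
      fix n assume "n \<ge> N"
      then have v: "vb (f n - L) (max qa qb)" using N by blast
      have "\<forall>p<qa. Rep_lc (f n - a) p = Rep_lc (L - a) p"
        using v by (auto simp: vb_def Rep_minus)
      then have "0 < f n - a" using qa by blast
      moreover have "\<forall>p<qb. Rep_lc (b - f n) p = Rep_lc (b - L) p"
        using v by (auto simp: vb_def Rep_minus)
      then have "0 < b - f n" using qb by blast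
      ultimately show "a < f n \<and> f n < b" by simp
    qed
  qed
qed

definition null :: "('i \<Rightarrow> lc) \<Rightarrow> bool" where
  "null a \<longleftrightarrow> (\<forall>q. finite {i. \<not> vb (a i) q})"

definition gsum :: "('i \<Rightarrow> lc) \<Rightarrow> lc" where
  "gsum a = Abs_lc (\<lambda>p. \<Sum>i\<in>{i. Rep_lc (a i) p \<noteq> 0}. Rep_lc (a i) p)"

lemma supp_fin: assumes "null a" shows "finite {i. Rep_lc (a i) p \<noteq> 0}"
proof -
  have "{i. Rep_lc (a i) p \<noteq> 0} \<subseteq> {i. \<not> vb (a i) (p + 1)}" by (auto simp: vb_def intro!: exI[of _ p])
  moreover have "finite {i. \<not> vb (a i) (p + 1)}" using assms unfolding null_def by blast
  ultimately show ?thesis by (rule finite_subset)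
qed

lemma LF_gsum: assumes "null a" shows "LF (\<lambda>p. \<Sum>i\<in>{i. Rep_lc (a i) p \<noteq> 0}. Rep_lc (a i) p)"
  unfolding LF_def
proof
  fix q
  define F where "F = {i. \<not> vb (a i) q}"
  have fF: "finite F" using assms by (simp add: null_def F_def)
  have "{p. p < q \<and> (\<Sum>i\<in>{i. Rep_lc (a i) p \<noteq> 0}. Rep_lc (a i) p) \<noteq> 0}
        \<subseteq> (\<Union>i\<in>F. {p. p < q \<and> Rep_lc (a i) p \<noteq> 0})"
  proof
    fix p assume "p \<in> {p. p < q \<and> (\<Sum>i\<in>{i. Rep_lc (a i) p \<noteq> 0}. Rep_lc (a i) p) \<noteq> 0}"
    then have pq: "p < q" and s: "(\<Sum>i\<in>{i. Rep_lc (a i) p \<noteq> 0}. Rep_lc (a i) p) \<noteq> 0" by auto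
    have "{i. Rep_lc (a i) p \<noteq> 0} \<noteq> {}"
    proof
      assume "{i. Rep_lc (a i) p \<noteq> 0} = {}"
      then show False using s by simp
    qed
    then obtain i where "Rep_lc (a i) p \<noteq> 0" by blast
    then show "p \<in> (\<Union>i\<in>F. {p. p < q \<and> Rep_lc (a i) p \<noteq> 0})"
      using pq by (auto simp: F_def vb_def)
  qed
  moreover have "finite (\<Union>i\<in>F. {p. p < q \<and> Rep_lc (a i) p \<noteq> 0})"
    using fF LF_Rep by (auto simp: LF_def)
  ultimately show "finite {p. p < q \<and> (\<Sum>i\<in>{i. Rep_lc (a i) p \<noteq> 0}. Rep_lc (a i) p) \<noteq> 0}"
    by (rule finite_subset)
qed

lemma Rep_gsum:
  assumes "null a" "finite X" "{i. Rep_lc (a i) p \<noteq> 0} \<subseteq> X"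
  shows "Rep_lc (gsum a) p = (\<Sum>i\<in>X. Rep_lc (a i) p)"
proof -
  have "Rep_lc (gsum a) p = (\<Sum>i\<in>{i. Rep_lc (a i) p \<noteq> 0}. Rep_lc (a i) p)"
    by (simp add: gsum_def Rep_Abs LF_gsum[OF assms(1)])
  also have "\<dots> = (\<Sum>i\<in>X. Rep_lc (a i) p)"
    by (rule sum.mono_neutral_left) (use assms in auto)
  finally show ?thesis .
qed

lemma null_add: "null a \<Longrightarrow> null b \<Longrightarrow> null (\<lambda>i. a i + b i)"
  unfolding null_def
proof (intro allI)
  fix q assume "\<forall>q. finite {i. \<not> vb (a i) q}" "\<forall>q. finite {i. \<not> vb (b i) q}"
  then have "finite ({i. \<not> vb (a i) q} \<union> {i. \<not> vb (b i) q})" by auto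
  then show "finite {i. \<not> vb (a i + b i) q}" by (rule finite_subset[rotated]) (auto intro: vb_add)
qed

lemma null_diff: "null a \<Longrightarrow> null b \<Longrightarrow> null (\<lambda>i. a i - b i)"
  unfolding null_def
proof (intro allI)
  fix q assume "\<forall>q. finite {i. \<not> vb (a i) q}" "\<forall>q. finite {i. \<not> vb (b i) q}"
  then have "finite ({i. \<not> vb (a i) q} \<union> {i. \<not> vb (b i) q})" by auto
  then show "finite {i. \<not> vb (a i - b i) q}" by (rule finite_subset[rotated]) (auto intro: vb_diff)
qed

lemma gsum_add: assumes "null a" "null b" shows "gsum (\<lambda>i. a i + b i) = gsum a + gsum b"
proof (rule lc_eq)
  fix p
  define X where "X = {i. Rep_lc (a i) p \<noteq> 0} \<union> {i. Rep_lc (b i) p \<noteq> 0}"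
  have fX: "finite X" using supp_fin[OF assms(1)] supp_fin[OF assms(2)] by (auto simp: X_def)
  show "Rep_lc (gsum (\<lambda>i. a i + b i)) p = Rep_lc (gsum a + gsum b) p"
    unfolding Rep_plus
    using supp_fin[OF assms(1), of p] supp_fin[OF assms(2), of p]
    by (subst (1 2 3) Rep_gsum[where X = X]) (auto simp: X_def null_add assms Rep_plus sum.distrib)
qed

lemma gsum_diff: assumes "null a" "null b" shows "gsum (\<lambda>i. a i - b i) = gsum a - gsum b"
proof (rule lc_eq)
  fix p
  define X where "X = {i. Rep_lc (a i) p \<noteq> 0} \<union> {i. Rep_lc (b i) p \<noteq> 0}"
  have fX: "finite X" using supp_fin[OF assms(1)] supp_fin[OF assms(2)] by (auto simp: X_def)
  show "Rep_lc (gsum (\<lambda>i. a i - b i)) p = Rep_lc (gsum a - gsum b) p"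
    unfolding Rep_minus
    using supp_fin[OF assms(1), of p] supp_fin[OF assms(2), of p]
    by (subst (1 2 3) Rep_gsum[where X = X]) (auto simp: X_def null_diff assms Rep_minus sum_subtractf)
qed

lemma vb_mono:
  assumes "0 \<le> x" "x \<le> y" "vb y q" shows "vb x q"
proof (rule ccontr)
  assume nv: "\<not> vb x q"
  then have "x \<noteq> 0" using vb_zero by auto
  then have "0 < x" using assms(1) by simp
  then obtain m where m: "Rep_lc x m > 0" "vb x m" using lead_pos by blast
  obtain p0 where p0: "p0 < q" "Rep_lc x p0 \<noteq> 0" using nv by (auto simp: vb_def)
  then have "\<not> p0 < m" using m(2) by (auto simp: vb_def)
  then have "m < q" using p0(1) by simp
  show False
  proof (cases "y = x")
    case True then show ?thesis using assms(3) m \<open>m < q\<close> by (auto simp: vb_def)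
  next
    case False
    then have "0 < y - x" using assms(2) by simp
    then obtain m' where m': "Rep_lc (y - x) m' > 0" "vb (y - x) m'" using lead_pos by blast
    define k where "k = min m m'"
    have "Rep_lc x k \<ge> 0" using m by (cases "k < m") (auto simp: vb_def k_def)
    moreover have "Rep_lc (y - x) k \<ge> 0" using m' by (cases "k < m'") (auto simp: vb_def k_def)
    moreover have "Rep_lc x k > 0 \<or> Rep_lc (y - x) k > 0" using m m' by (auto simp: k_def min_def)
    ultimately have "Rep_lc y k > 0" using Rep_minus[of y x k] by linarith
    moreover have "k < q" using \<open>m < q\<close> by (simp add: k_def)
    ultimately show False using assms(3) by (auto simp: vb_def)
  qed
qed

lemma null_le: assumes "\<And>i. 0 \<le> a i" "\<And>i. a i \<le> b i" "null b" shows "null a"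
  unfolding null_def
proof
  fix q
  have "{i. \<not> vb (a i) q} \<subseteq> {i. \<not> vb (b i) q}" using vb_mono assms(1,2) by blast
  then show "finite {i. \<not> vb (a i) q}" using assms(3) finite_subset by (auto simp: null_def)
qed

lemma gsum_vb: assumes "null a" "\<And>i. vb (a i) q" shows "vb (gsum a) q"
  unfolding vb_def
proof (intro allI impI)
  fix p assume "p < q"
  then have "{i. Rep_lc (a i) p \<noteq> 0} \<subseteq> {}" using assms(2) by (auto simp: vb_def)
  then show "Rep_lc (gsum a) p = 0" using Rep_gsum[OF assms(1), of "{}"] by simp
qed

lemma null_nat: "null (a :: nat \<Rightarrow> lc) \<longleftrightarrow> (\<forall>q. \<exists>N. \<forall>n\<ge>N. vb (a n) q)"
proof
  assume "null a"
  show "\<forall>q. \<exists>N. \<forall>n\<ge>N. vb (a n) q"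
  proof
    fix q
    have "finite {i. \<not> vb (a i) q}" using \<open>null a\<close> by (simp add: null_def)
    then obtain N where "\<forall>n\<in>{i. \<not> vb (a i) q}. n < N" using finite_nat_set_iff_bounded by blast
    then show "\<exists>N. \<forall>n\<ge>N. vb (a n) q" by (auto intro!: exI[of _ N])
  qed
next
  assume h: "\<forall>q. \<exists>N. \<forall>n\<ge>N. vb (a n) q"
  show "null a" unfolding null_def
  proof
    fix q obtain N where "\<forall>n\<ge>N. vb (a n) q" using h by blast
    then have "{i. \<not> vb (a i) q} \<subseteq> {..<N}" by (auto simp: not_less[symmetric])
    then show "finite {i. \<not> vb (a i) q}" by (rule finite_subset) simp
  qed
qed

lemma psum_eq: "lc_psum a n = sum a {..<n}"
  by (induction n) (simp_all add: add.commute)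

lemma gsum_psum_agree:
  assumes "null (a :: nat \<Rightarrow> lc)" "\<forall>i\<ge>N. vb (a i) q" "n \<ge> N"
  shows "vb (sum a {..<n} - gsum a) q"
  unfolding vb_def
proof (intro allI impI)
  fix p assume "p < q"
  have "{i. Rep_lc (a i) p \<noteq> 0} \<subseteq> {..<n}"
  proof
    fix i assume i: "i \<in> {i. Rep_lc (a i) p \<noteq> 0}"
    show "i \<in> {..<n}"
    proof (rule ccontr)
      assume "i \<notin> {..<n}"
      then have "i \<ge> N" using assms(3) by auto
      then have "vb (a i) q" using assms(2) by blast
      then show False using i \<open>p < q\<close> by (auto simp: vb_def)
    qed
  qed
  then show "Rep_lc (sum a {..<n} - gsum a) p = 0"
    using Rep_gsum[OF assms(1) finite_lessThan] by (simp add: Rep_minus Rep_sum)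
qed

lemma sums_iff: "lc_sums a s \<longleftrightarrow> null a \<and> s = gsum a"
proof
  assume "null a \<and> s = gsum a"
  then have na: "null a" and s: "s = gsum a" by auto
  show "lc_sums a s" unfolding lc_sums_def tendsto_iff psum_eq s
  proof
    fix q obtain N where "\<forall>n\<ge>N. vb (a n) q" using null_nat[THEN iffD1, OF na] by blast
    then show "\<exists>N. \<forall>n\<ge>N. vb (sum a {..<n} - gsum a) q"
      using gsum_psum_agree[OF na] by blast
  qed
next
  assume "lc_sums a s"
  then have h: "\<forall>q. \<exists>N. \<forall>n\<ge>N. vb (sum a {..<n} - s) q"
    unfolding lc_sums_def tendsto_iff psum_eq .
  have na: "null a" unfolding null_nat
  proof
    fix q obtain N where N: "\<forall>n\<ge>N. vb (sum a {..<n} - s) q" using h by blast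
    have "\<forall>n\<ge>N. vb (a n) q"
    proof (intro allI impI)
      fix n assume "n \<ge> N"
      have "Suc n \<ge> N" using \<open>n \<ge> N\<close> by simp
      then have v1: "vb (sum a {..<Suc n} - s) q" using N by blast
      have v2: "vb (sum a {..<n} - s) q" using N \<open>n \<ge> N\<close> by blast
      have "vb ((sum a {..<Suc n} - s) - (sum a {..<n} - s)) q" by (rule vb_diff[OF v1 v2])
      then show "vb (a n) q" by (simp add: algebra_simps)
    qed
    then show "\<exists>N. \<forall>n\<ge>N. vb (a n) q" by blast
  qed
  have "s - gsum a = 0"
  proof (rule vb_all_eq0)
    fix q
    obtain N where N: "\<forall>n\<ge>N. vb (sum a {..<n} - s) q" using h by blast
    obtain N' where N': "\<forall>n\<ge>N'. vb (a n) q" using null_nat[THEN iffD1, OF na] by blast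
    have "vb ((sum a {..<max N N'} - gsum a) - (sum a {..<max N N'} - s)) q"
      by (rule vb_diff) (use gsum_psum_agree[OF na N'] N in auto)
    then show "vb (s - gsum a) q" by simp
  qed
  then show "null a \<and> s = gsum a" using na by simp
qed

lemma gsum_mono_nat:
  assumes "null (a :: nat \<Rightarrow> lc)" "null b" "\<And>i. a i \<le> b i" shows "gsum a \<le> gsum b"
proof (rule ccontr)
  assume "\<not> gsum a \<le> gsum b"
  then have "0 < gsum a - gsum b" by simp
  then obtain q where q: "\<forall>w. (\<forall>p<q. Rep_lc w p = Rep_lc (gsum a - gsum b) p) \<longrightarrow> 0 < w"
    using agree_pos by blast
  obtain N1 where N1: "\<forall>n\<ge>N1. vb (a n) q" using null_nat[THEN iffD1, OF assms(1)] by blast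
  obtain N2 where N2: "\<forall>n\<ge>N2. vb (b n) q" using null_nat[THEN iffD1, OF assms(2)] by blast
  define N where "N = max N1 N2"
  have va: "vb (sum a {..<N} - gsum a) q" using gsum_psum_agree[OF assms(1) N1] by (simp add: N_def)
  have vb': "vb (sum b {..<N} - gsum b) q" using gsum_psum_agree[OF assms(2) N2] by (simp add: N_def)
  have "\<forall>p<q. Rep_lc (sum a {..<N} - sum b {..<N}) p = Rep_lc (gsum a - gsum b) p"
    using va vb' by (auto simp: vb_def Rep_minus)
  then have "0 < sum a {..<N} - sum b {..<N}" using q by blast
  moreover have "sum a {..<N} \<le> sum b {..<N}" by (rule sum_mono) (use assms(3) in auto)
  ultimately show False by simp
qed

lemma null_reindex: assumes "bij h" "null a" shows "null (a \<circ> h)"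
  unfolding null_def
proof
  fix q
  have "{i. \<not> vb ((a \<circ> h) i) q} = h -` {j. \<not> vb (a j) q}" by auto
  moreover have "finite (h -` {j. \<not> vb (a j) q})"
    using assms by (intro finite_vimageI) (auto simp: null_def bij_def)
  ultimately show "finite {i. \<not> vb ((a \<circ> h) i) q}" by simp
qed

lemma gsum_reindex: assumes "bij h" "null a" shows "gsum (a \<circ> h) = gsum a"
proof (rule lc_eq)
  fix p
  define S where "S = {j. Rep_lc (a j) p \<noteq> 0}"
  have fS: "finite S" using supp_fin[OF assms(2)] by (simp add: S_def)
  have inj: "inj h" using assms(1) by (simp add: bij_def)
  have fX: "finite (h -` S)" using fS inj by (intro finite_vimageI)
  have "Rep_lc (gsum (a \<circ> h)) p = (\<Sum>i\<in>h -` S. Rep_lc (a (h i)) p)"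
    by (subst Rep_gsum[OF null_reindex[OF assms] fX]) (auto simp: S_def)
  also have "\<dots> = (\<Sum>j\<in>h ` (h -` S). Rep_lc (a j) p)"
    by (simp only: sum.reindex[OF inj_on_subset[OF inj subset_UNIV]] comp_def)
  also have "h ` (h -` S) = S" using assms(1) by (simp add: bij_def surj_image_vimage_eq)
  also have "(\<Sum>j\<in>S. Rep_lc (a j) p) = Rep_lc (gsum a) p"
    by (subst Rep_gsum[OF assms(2) fS]) (auto simp: S_def)
  finally show "Rep_lc (gsum (a \<circ> h)) p = Rep_lc (gsum a) p" .
qed

lemma gsum_mono_pair:
  assumes "null (a :: nat \<times> nat \<Rightarrow> lc)" "null b" "\<And>i. a i \<le> b i" shows "gsum a \<le> gsum b"
proof -
  have "gsum (a \<circ> prod_decode) \<le> gsum (b \<circ> prod_decode)"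
    by (rule gsum_mono_nat) (use assms null_reindex[OF bij_prod_decode] in auto)
  then show ?thesis using gsum_reindex[OF bij_prod_decode] assms by simp
qed

lemma gsum_inner:
  assumes "finite F" "null (\<lambda>(k, i). f k i)" "\<And>k i. i \<notin> F \<Longrightarrow> f k i = 0"
  shows "null (\<lambda>k. \<Sum>i\<in>F. f k i) \<and> gsum (\<lambda>k. \<Sum>i\<in>F. f k i) = gsum (\<lambda>(k, i). f k i)"
proof
  show nn: "null (\<lambda>k. \<Sum>i\<in>F. f k i)" unfolding null_def
  proof
    fix q
    define S where "S = {ki. \<not> vb ((\<lambda>(k, i). f k i) ki) q}"
    have fS: "finite S" using assms(2) unfolding null_def S_def by blast
    have "{k. \<not> vb (\<Sum>i\<in>F. f k i) q} \<subseteq> fst ` S"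
    proof
      fix k assume k: "k \<in> {k. \<not> vb (\<Sum>i\<in>F. f k i) q}"
      have "\<exists>i. \<not> vb (f k i) q"
      proof (rule ccontr)
        assume "\<not> (\<exists>i. \<not> vb (f k i) q)"
        then have "vb (\<Sum>i\<in>F. f k i) q" by (intro vb_sum) blast
        then show False using k by simp
      qed
      then obtain i where "\<not> vb (f k i) q" by blast
      then have "(k, i) \<in> S" by (simp add: S_def)
      then show "k \<in> fst ` S" by (rule image_eqI[of k fst "(k, i)", rotated]) simp
    qed
    moreover have "finite (fst ` S)" using fS by simp
    ultimately show "finite {k. \<not> vb (\<Sum>i\<in>F. f k i) q}" by (rule finite_subset)
  qed
  show "gsum (\<lambda>k. \<Sum>i\<in>F. f k i) = gsum (\<lambda>(k, i). f k i)"
  proof (rule lc_eq)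
    fix p
    define P where "P = {ki. Rep_lc ((\<lambda>(k, i). f k i) ki) p \<noteq> 0}"
    have fP: "finite P" using supp_fin[OF assms(2)] by (simp add: P_def)
    define K where "K = fst ` P"
    have fK: "finite K" using fP by (simp add: K_def)
    have PKF: "P \<subseteq> K \<times> F"
    proof
      fix ki assume kiP: "ki \<in> P"
      obtain k i where ki: "ki = (k, i)" by force
      have r: "Rep_lc (f k i) p \<noteq> 0" using kiP ki by (simp add: P_def)
      have "i \<in> F"
      proof (rule ccontr)
        assume "i \<notin> F" then have "f k i = 0" using assms(3) by blast
        then show False using r by (simp add: Rep_zero)
      qed
      moreover have "k \<in> K" unfolding K_def using kiP ki by (intro image_eqI[of k fst "(k, i)"]) simp_all
      ultimately show "ki \<in> K \<times> F" using ki by simp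
    qed
    have "Rep_lc (gsum (\<lambda>k. \<Sum>i\<in>F. f k i)) p = (\<Sum>k\<in>K. Rep_lc (\<Sum>i\<in>F. f k i) p)"
    proof (rule Rep_gsum[OF nn fK])
      show "{k. Rep_lc (\<Sum>i\<in>F. f k i) p \<noteq> 0} \<subseteq> K"
      proof
        fix k assume "k \<in> {k. Rep_lc (\<Sum>i\<in>F. f k i) p \<noteq> 0}"
        then have ne: "(\<Sum>i\<in>F. Rep_lc (f k i) p) \<noteq> 0" by (simp add: Rep_sum)
        have "\<exists>i. Rep_lc (f k i) p \<noteq> 0"
        proof (rule ccontr)
          assume "\<not> (\<exists>i. Rep_lc (f k i) p \<noteq> 0)"
          then show False using ne by simp
        qed
        then obtain i where "Rep_lc (f k i) p \<noteq> 0" by blast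
        then have "(k, i) \<in> P" by (simp add: P_def)
        then show "k \<in> K" unfolding K_def by (intro image_eqI[of k fst "(k, i)"]) simp_all
      qed
    qed
    also have "\<dots> = (\<Sum>k\<in>K. \<Sum>i\<in>F. Rep_lc (f k i) p)" by (simp add: Rep_sum)
    also have "\<dots> = (\<Sum>ki\<in>K \<times> F. Rep_lc ((\<lambda>(k, i). f k i) ki) p)"
      by (simp only: sum.cartesian_product split_def)
    also have "\<dots> = Rep_lc (gsum (\<lambda>(k, i). f k i)) p"
    proof (rule Rep_gsum[symmetric, OF assms(2)])
      show "finite (K \<times> F)" using fK assms(1) by simp
      show "{ki. Rep_lc ((\<lambda>(k, i). f k i) ki) p \<noteq> 0} \<subseteq> K \<times> F" using PKF by (simp add: P_def)
    qed
    finally show "Rep_lc (gsum (\<lambda>k. \<Sum>i\<in>F. f k i)) p = Rep_lc (gsum (\<lambda>(k, i). f k i)) p" .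
  qed
qed

lemma key_id:
  fixes lo hi c d :: "'a::linordered_ab_group_add"
  assumes "c < d"
  shows "max 0 (hi - lo) = max 0 (min hi c - lo) + max 0 (min hi d - max lo c) + max 0 (hi - max lo d)"
  using assms by (auto simp: max_def min_def algebra_simps)

definition half :: "lc \<Rightarrow> lc" where "half x = Abs_lc (\<lambda>q. Rep_lc x q / 2)"

lemma LF_half: "LF (\<lambda>q. Rep_lc x q / 2)"
  using LF_Rep[of x] by (simp add: LF_def)

lemma Rep_half: "Rep_lc (half x) q = Rep_lc x q / 2"
  by (simp add: half_def Rep_Abs[OF LF_half])

lemma half_half: "half x + half x = x"
  by (rule lc_eq) (simp add: Rep_plus Rep_half)

lemma half_pos: "0 < x \<Longrightarrow> 0 < half x"
  unfolding pos_gt0 lc_pos_iff Rep_half by auto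

lemma half_less: "0 < x \<Longrightarrow> half x < x"
  using half_pos[of x] half_half[of x] by (metis less_add_same_cancel1)

lemma midpoint: "a < b \<Longrightarrow> a < a + half (b - a) \<and> a + half (b - a) < b"
proof -
  assume "a < b"
  then have h: "0 < half (b - a)" "half (b - a) < b - a" using half_pos half_less by simp_all
  then show ?thesis by (simp add: less_diff_eq add.commute)
qed

lemma dense_lc: "a < (b::lc) \<Longrightarrow> \<exists>x. a < x \<and> x < b"
  using midpoint by blast

lemma interval_props:
  assumes "lc_interval a b S"
  shows "a < b" "\<And>x. a < x \<Longrightarrow> x < b \<Longrightarrow> x \<in> S" "\<And>x. x \<in> S \<Longrightarrow> a \<le> x \<and> x \<le> b"
  using assms unfolding lc_interval_def by auto

lemma interval_unique:
  assumes "lc_interval a b S" "lc_interval a' b' S" shows "a = a' \<and> b = b'"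
proof -
  have lo: "a \<le> a'" if "lc_interval a b S" "lc_interval a' b' S" for a b a' b'
  proof (rule ccontr)
    assume "\<not> a \<le> a'"
    then have "a' < min a b'" using interval_props(1)[OF that(2)] by simp
    then obtain x where x: "a' < x" "x < min a b'" using dense_lc by blast
    then have "x \<in> S" using interval_props(2)[OF that(2)] by simp
    then have "a \<le> x" using interval_props(3)[OF that(1)] by blast
    then show False using x by (meson leD min_less_iff_conj)
  qed
  have hi: "b' \<le> b" if "lc_interval a b S" "lc_interval a' b' S" for a b a' b'
  proof (rule ccontr)
    assume "\<not> b' \<le> b"
    then have "max b a' < b'" using interval_props(1)[OF that(2)] by simp
    then obtain x where x: "max b a' < x" "x < b'" using dense_lc by blast
    then have "x \<in> S" using interval_props(2)[OF that(2)] by simp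
    then have "x \<le> b" using interval_props(3)[OF that(1)] by blast
    then show False using x by (meson leD max_less_iff_conj)
  qed
  show ?thesis using lo[OF assms] lo[OF assms(2,1)] hi[OF assms] hi[OF assms(2,1)] by simp
qed

lemma lc_len_eq: assumes "lc_interval a b S" shows "lc_len S = b - a"
  unfolding lc_len_def
proof (rule the_equality)
  show "\<exists>a' b'. lc_interval a' b' S \<and> b - a = b' - a'" using assms by blast
  fix l assume "\<exists>a' b'. lc_interval a' b' S \<and> l = b' - a'"
  then obtain a' b' where "lc_interval a' b' S" "l = b' - a'" by blast
  then show "l = b - a" using interval_unique[OF assms] by simp
qed

lemma is_interval_props:
  assumes "is_lc_interval S"
  shows "\<exists>a b. a < b \<and> (\<forall>x. a < x \<and> x < b \<longrightarrow> x \<in> S) \<and> (\<forall>x\<in>S. a \<le> x \<and> x \<le> b) \<and> lc_len S = b - a"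
proof -
  obtain a b where ab: "lc_interval a b S" using assms by (auto simp: is_lc_interval_def)
  show ?thesis using interval_props[OF ab] lc_len_eq[OF ab] by blast
qed

lemma closed_interval:
  assumes "u < w" shows "is_lc_interval {x. u \<le> x \<and> x \<le> w}" "lc_len {x. u \<le> x \<and> x \<le> w} = w - u"
proof -
  have "lc_interval u w {x. u \<le> x \<and> x \<le> w}" using assms by (simp add: lc_interval_def)
  then show "is_lc_interval {x. u \<le> x \<and> x \<le> w}" "lc_len {x. u \<le> x \<and> x \<le> w} = w - u"
    by (auto simp: is_lc_interval_def lc_len_eq)
qed

definition len0 :: "lc \<times> lc \<Rightarrow> lc" where "len0 pr = max 0 (snd pr - fst pr)"

definition ilen :: "lc \<Rightarrow> lc \<Rightarrow> lc \<Rightarrow> lc \<Rightarrow> lc" where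
  "ilen lo hi c d = max 0 (min hi d - max lo c)"

lemma gaps:
  fixes c d :: "nat \<Rightarrow> lc"
  assumes "finite F" "\<forall>n\<in>F. c n < d n"
    "\<forall>n\<in>F. \<forall>n'\<in>F. n \<noteq> n' \<longrightarrow> d n \<le> c n' \<or> d n' \<le> c n"
  shows "\<exists>ps. length ps = card F + 1 \<and>
     (\<forall>x. lo \<le> x \<and> x \<le> hi \<and> (\<forall>n\<in>F. \<not> (c n < x \<and> x < d n)) \<longrightarrow> (\<exists>pr\<in>set ps. fst pr \<le> x \<and> x \<le> snd pr)) \<and>
     sum_list (map len0 ps) = len0 (lo, hi) - (\<Sum>n\<in>F. ilen lo hi (c n) (d n))"
  using assms
proof (induction "card F" arbitrary: F lo hi rule: less_induct)
  case less
  show ?case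
  proof (cases "F = {}")
    case True
    then show ?thesis by (intro exI[of _ "[(lo, hi)]"]) auto
  next
    case False
    then obtain J where J: "J \<in> F" by blast
    define FL where "FL = {n \<in> F - {J}. d n \<le> c J}"
    define FR where "FR = {n \<in> F - {J}. d J \<le> c n}"
    have cdJ: "c J < d J" using less.prems(2) J by blast
    have split: "F - {J} = FL \<union> FR" using less.prems(3) J by (auto simp: FL_def FR_def)
    have disj: "FL \<inter> FR = {}"
    proof (rule ccontr)
      assume "FL \<inter> FR \<noteq> {}"
      then obtain n where n: "n \<in> F" "d n \<le> c J" "d J \<le> c n" by (auto simp: FL_def FR_def)
      have "c n < d n" using less.prems(2) n(1) by blast
      then show False using n cdJ by simp
    qed
    have finL: "finite FL" and finR: "finite FR" using less.prems(1) by (auto simp: FL_def FR_def)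
    have cardF: "card F = Suc (card FL + card FR)"
    proof -
      have "card (F - {J}) = card FL + card FR" using split disj finL finR by (simp add: card_Un_disjoint)
      moreover have "card F = Suc (card (F - {J}))" by (rule card_Suc_Diff1[OF less.prems(1) J, symmetric])
      ultimately show ?thesis by simp
    qed
    have ltL: "card FL < card F" and ltR: "card FR < card F" using cardF by simp_all
    have subL: "FL \<subseteq> F" and subR: "FR \<subseteq> F" by (auto simp: FL_def FR_def)
    obtain psL where psL: "length psL = card FL + 1"
      "\<forall>x. lo \<le> x \<and> x \<le> min hi (c J) \<and> (\<forall>n\<in>FL. \<not> (c n < x \<and> x < d n)) \<longrightarrow> (\<exists>pr\<in>set psL. fst pr \<le> x \<and> x \<le> snd pr)"
      "sum_list (map len0 psL) = len0 (lo, min hi (c J)) - (\<Sum>n\<in>FL. ilen lo (min hi (c J)) (c n) (d n))"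
      using less.hyps[OF ltL finL, of lo "min hi (c J)"] less.prems(2,3) subL by blast
    obtain psR where psR: "length psR = card FR + 1"
      "\<forall>x. max lo (d J) \<le> x \<and> x \<le> hi \<and> (\<forall>n\<in>FR. \<not> (c n < x \<and> x < d n)) \<longrightarrow> (\<exists>pr\<in>set psR. fst pr \<le> x \<and> x \<le> snd pr)"
      "sum_list (map len0 psR) = len0 (max lo (d J), hi) - (\<Sum>n\<in>FR. ilen (max lo (d J)) hi (c n) (d n))"
      using less.hyps[OF ltR finR, of "max lo (d J)" hi] less.prems(2,3) subR by blast
    have sL: "(\<Sum>n\<in>FL. ilen lo (min hi (c J)) (c n) (d n)) = (\<Sum>n\<in>FL. ilen lo hi (c n) (d n))"
    proof (rule sum.cong)
      fix n assume "n \<in> FL"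
      then have "d n \<le> c J" by (simp add: FL_def)
      then have "min (min hi (c J)) (d n) = min hi (d n)" by (auto simp: min_def)
      then show "ilen lo (min hi (c J)) (c n) (d n) = ilen lo hi (c n) (d n)" by (simp add: ilen_def)
    qed simp
    have sR: "(\<Sum>n\<in>FR. ilen (max lo (d J)) hi (c n) (d n)) = (\<Sum>n\<in>FR. ilen lo hi (c n) (d n))"
    proof (rule sum.cong)
      fix n assume "n \<in> FR"
      then have "d J \<le> c n" by (simp add: FR_def)
      then have "max (max lo (d J)) (c n) = max lo (c n)" by (auto simp: max_def)
      then show "ilen (max lo (d J)) hi (c n) (d n) = ilen lo hi (c n) (d n)" by (simp add: ilen_def)
    qed simp
    have sF: "(\<Sum>n\<in>F. ilen lo hi (c n) (d n)) = ilen lo hi (c J) (d J) + (\<Sum>n\<in>FL. ilen lo hi (c n) (d n)) + (\<Sum>n\<in>FR. ilen lo hi (c n) (d n))"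
    proof -
      have "F = insert J (FL \<union> FR)" using split J by blast
      moreover have "J \<notin> FL \<union> FR" by (auto simp: FL_def FR_def)
      ultimately show ?thesis using finL finR disj by (simp add: sum.union_disjoint add.assoc)
    qed
    have kid: "len0 (lo, hi) = len0 (lo, min hi (c J)) + ilen lo hi (c J) (d J) + len0 (max lo (d J), hi)"
      unfolding len0_def ilen_def using key_id[OF cdJ, of hi lo] by simp
    show ?thesis
    proof (intro exI[of _ "psL @ psR"] conjI)
      show "length (psL @ psR) = card F + 1" using psL(1) psR(1) cardF by simp
      show "\<forall>x. lo \<le> x \<and> x \<le> hi \<and> (\<forall>n\<in>F. \<not> (c n < x \<and> x < d n)) \<longrightarrow> (\<exists>pr\<in>set (psL @ psR). fst pr \<le> x \<and> x \<le> snd pr)"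
      proof (intro allI impI)
        fix x assume x: "lo \<le> x \<and> x \<le> hi \<and> (\<forall>n\<in>F. \<not> (c n < x \<and> x < d n))"
        then have "x \<le> c J \<or> d J \<le> x" using J by force
        then show "\<exists>pr\<in>set (psL @ psR). fst pr \<le> x \<and> x \<le> snd pr"
        proof
          assume "x \<le> c J"
          then have "\<exists>pr\<in>set psL. fst pr \<le> x \<and> x \<le> snd pr" using psL(2) x subL by auto
          then show ?thesis by auto
        next
          assume "d J \<le> x"
          then have "\<exists>pr\<in>set psR. fst pr \<le> x \<and> x \<le> snd pr" using psR(2) x subR by auto
          then show ?thesis by auto
        qed
      qed
      have "sum_list (map len0 (psL @ psR)) = (len0 (lo, min hi (c J)) - (\<Sum>n\<in>FL. ilen lo hi (c n) (d n)))
          + (len0 (max lo (d J), hi) - (\<Sum>n\<in>FR. ilen lo hi (c n) (d n)))"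
        using psL(3) psR(3) sL sR by simp
      also have "\<dots> = (len0 (lo, min hi (c J)) + ilen lo hi (c J) (d J) + len0 (max lo (d J), hi))
          - (ilen lo hi (c J) (d J) + (\<Sum>n\<in>FL. ilen lo hi (c n) (d n)) + (\<Sum>n\<in>FR. ilen lo hi (c n) (d n)))"
        by (simp add: algebra_simps)
      finally show "sum_list (map len0 (psL @ psR)) = len0 (lo, hi) - (\<Sum>n\<in>F. ilen lo hi (c n) (d n))"
        using sF kid by simp
    qed
  qed
qed

lemma pert: assumes "0 < z" shows "\<exists>q. \<forall>g. vb g q \<longrightarrow> 0 < z - g"
proof -
  obtain q where q: "\<forall>w. (\<forall>p<q. Rep_lc w p = Rep_lc z p) \<longrightarrow> 0 < w" using agree_pos[OF assms] by blast
  show ?thesis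
  proof (intro exI allI impI)
    fix g assume "vb g q"
    then have "\<forall>p<q. Rep_lc (z - g) p = Rep_lc z p" by (simp add: vb_def Rep_minus)
    then show "0 < z - g" using q by blast
  qed
qed

lemma vb_mono_lc: "vb (mono_lc r x) q \<longleftrightarrow> \<not> x < q \<or> r = 0"
  by (auto simp: vb_def Rep_mono)

lemma finite_rat_nat: "finite {n::nat. of_nat n < (r::rat)}"
proof -
  have "{n::nat. of_nat n < r} \<subseteq> {..<nat \<lceil>r\<rceil>}"
  proof
    fix n :: nat assume "n \<in> {n::nat. of_nat n < r}"
    then have "of_nat n < r" by simp
    then have "int n < \<lceil>r\<rceil>" by linarith
    then show "n \<in> {..<nat \<lceil>r\<rceil>}" by simp
  qed
  then show ?thesis by (rule finite_subset) simp
qed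

lemma pad_exists:
  assumes "0 < \<epsilon>"
  shows "\<exists>e :: nat \<times> nat \<Rightarrow> lc. (\<forall>i. 0 < e i) \<and> null e \<and> gsum e < \<epsilon>"
proof -
  obtain m where m: "Rep_lc \<epsilon> m > 0" "vb \<epsilon> m" using lead_pos[OF assms] by blast
  define e where "e = (\<lambda>ki. mono_lc 1 (m + 1 + of_nat (prod_encode ki)))"
  have pos: "\<forall>i. 0 < e i" by (simp add: e_def mono_pos)
  have ne: "null e" unfolding null_def
  proof
    fix q
    have "{ki. \<not> vb (e ki) q} = prod_encode -` {n. of_nat n < q - m - 1}"
      by (auto simp: e_def vb_mono_lc algebra_simps)
    moreover have "finite (prod_encode -` {n. of_nat n < q - m - 1})"
      by (rule finite_vimageI[OF finite_rat_nat inj_prod_encode])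
    ultimately show "finite {ki. \<not> vb (e ki) q}" by simp
  qed
  have "\<forall>ki. vb (e ki) (m + 1)" by (simp add: e_def vb_mono_lc)
  then have vg: "vb (gsum e) (m + 1)" using gsum_vb[OF ne] by blast
  have "\<forall>p<m+1. Rep_lc (\<epsilon> - gsum e) p = Rep_lc \<epsilon> p" using vg by (simp add: vb_def Rep_minus)
  then have "Rep_lc (\<epsilon> - gsum e) m > 0" "vb (\<epsilon> - gsum e) m" using m by (auto simp: vb_def)
  then have "0 < \<epsilon> - gsum e" unfolding pos_gt0 lc_pos_iff vb_def by blast
  then show ?thesis using pos ne by (intro exI[of _ e]) simp
qed

lemma le_eps: assumes "\<And>\<rho>. 0 < \<rho> \<Longrightarrow> x \<le> y + \<rho>" shows "x \<le> (y::lc)"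
proof (rule ccontr)
  assume "\<not> x \<le> y"
  then have d: "0 < x - y" by simp
  then have "x \<le> y + half (x - y)" using assms half_pos by blast
  moreover have "half (x - y) < x - y" using half_less[OF d] .
  ultimately show False by (simp add: less_diff_eq add.commute leD)
qed

lemma inf_unique: "lc_is_inf X m \<Longrightarrow> lc_is_inf X m' \<Longrightarrow> m = m'"
  unfolding lc_is_inf_def by (meson order.antisym)

lemma Mu_inf: assumes "outer_measurable A" shows "lc_is_inf (cover_sums A) (Mu A)"
proof -
  obtain m where m: "lc_is_inf (cover_sums A) m" using assms by (auto simp: outer_measurable_def)
  have "Mu A = m" unfolding Mu_def
  proof (rule the_equality)
    show "lc_is_inf (cover_sums A) m" by (rule m)
    fix x assume "lc_is_inf (cover_sums A) x"
    then show "x = m" using inf_unique m by blast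
  qed
  then show ?thesis using m by simp
qed

lemma Mu_le: "outer_measurable A \<Longrightarrow> s \<in> cover_sums A \<Longrightarrow> Mu A \<le> s"
  using Mu_inf by (auto simp: lc_is_inf_def)

lemma Mu_glb: "outer_measurable A \<Longrightarrow> (\<forall>s\<in>cover_sums A. m \<le> s) \<Longrightarrow> m \<le> Mu A"
  using Mu_inf by (auto simp: lc_is_inf_def)

lemma cover_sums_iff:
  "s \<in> cover_sums X \<longleftrightarrow> (\<exists>S :: nat \<Rightarrow> lc set. (\<forall>n. is_lc_interval (S n)) \<and> X \<subseteq> (\<Union>n. S n) \<and>
      null (\<lambda>n. lc_len (S n)) \<and> s = gsum (\<lambda>n. lc_len (S n)))"
  unfolding cover_sums_def lc_cover_def sums_iff by blast

definition pcl :: "lc \<times> lc \<Rightarrow> lc \<Rightarrow> lc set" where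
  "pcl pr e = {x. fst pr \<le> x \<and> x \<le> max (snd pr) (fst pr + e)}"

lemma pcl_props:
  assumes "0 < e"
  shows "is_lc_interval (pcl pr e)" "lc_len (pcl pr e) = max (snd pr) (fst pr + e) - fst pr"
    "0 \<le> lc_len (pcl pr e)" "lc_len (pcl pr e) \<le> len0 pr + e"
    "fst pr \<le> x \<Longrightarrow> x \<le> snd pr \<Longrightarrow> x \<in> pcl pr e"
proof -
  have lt: "fst pr < max (snd pr) (fst pr + e)" using assms by (simp add: less_max_iff_disj)
  show "is_lc_interval (pcl pr e)" "lc_len (pcl pr e) = max (snd pr) (fst pr + e) - fst pr"
    using closed_interval[OF lt] by (simp_all add: pcl_def)
  then show "0 \<le> lc_len (pcl pr e)" using lt by simp
  have L: "lc_len (pcl pr e) = max (snd pr) (fst pr + e) - fst pr" by fact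
  show "lc_len (pcl pr e) \<le> len0 pr + e"
  proof (cases "snd pr \<le> fst pr + e")
    case True
    then have "lc_len (pcl pr e) = e" using L by (simp add: max_def)
    moreover have "0 \<le> len0 pr" by (simp add: len0_def)
    ultimately show ?thesis by simp
  next
    case False
    then have "lc_len (pcl pr e) = snd pr - fst pr" using L by (simp add: max_def)
    moreover have "fst pr < snd pr"
    proof -
      have "fst pr < fst pr + e" using assms by simp
      moreover have "fst pr + e < snd pr" using False by simp
      ultimately show ?thesis by (rule less_trans)
    qed
    then have "len0 pr = snd pr - fst pr" by (simp add: len0_def)
    ultimately show ?thesis using assms by simp
  qed
  show "fst pr \<le> x \<Longrightarrow> x \<le> snd pr \<Longrightarrow> x \<in> pcl pr e" by (auto simp: pcl_def le_max_iff_disj)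
qed

lemma cover_from_pieces:
  fixes P :: "nat \<times> nat \<Rightarrow> lc \<times> lc" and e :: "nat \<times> nat \<Rightarrow> lc"
  assumes epos: "\<And>i. 0 < e i" and ne: "null e" and nP: "null (\<lambda>i. len0 (P i))"
    and cov: "\<And>x. x \<in> X \<Longrightarrow> \<exists>i. fst (P i) \<le> x \<and> x \<le> snd (P i)"
  shows "\<exists>s\<in>cover_sums X. s \<le> gsum (\<lambda>i. len0 (P i)) + gsum e"
proof -
  define S where "S = (\<lambda>j. pcl (P (prod_decode j)) (e (prod_decode j)))"
  define b where "b = (\<lambda>i. len0 (P i) + e i)"
  have nb: "null b" unfolding b_def by (rule null_add[OF nP ne])
  have nbd: "null (b \<circ> prod_decode)" by (rule null_reindex[OF bij_prod_decode nb])
  have int: "\<forall>n. is_lc_interval (S n)" using pcl_props(1)[OF epos] by (simp add: S_def)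
  have le: "\<And>j. lc_len (S j) \<le> (b \<circ> prod_decode) j" using pcl_props(4)[OF epos] by (simp add: S_def b_def)
  have ge: "\<And>j. 0 \<le> lc_len (S j)" using pcl_props(3)[OF epos] by (simp add: S_def)
  have nS: "null (\<lambda>j. lc_len (S j))" by (rule null_le[OF ge le nbd])
  have cv: "X \<subseteq> (\<Union>n. S n)"
  proof
    fix x assume "x \<in> X"
    then obtain i where i: "fst (P i) \<le> x" "x \<le> snd (P i)" using cov by blast
    then have "x \<in> S (prod_encode i)" using pcl_props(5)[OF epos] by (simp add: S_def)
    then show "x \<in> (\<Union>n. S n)" by blast
  qed
  have "gsum (\<lambda>j. lc_len (S j)) \<in> cover_sums X" unfolding cover_sums_iff using int cv nS by blast
  moreover have "gsum (\<lambda>j. lc_len (S j)) \<le> gsum (b \<circ> prod_decode)"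
    by (rule gsum_mono_nat[OF nS nbd le])
  moreover have "gsum (b \<circ> prod_decode) = gsum (\<lambda>i. len0 (P i)) + gsum e"
    using gsum_reindex[OF bij_prod_decode nb] gsum_add[OF nP ne] by (simp add: b_def)
  ultimately show ?thesis by auto
qed

lemma sum_interleave: "(\<Sum>j<2*(M::nat). (g::nat \<Rightarrow> 'a::comm_monoid_add) j) = (\<Sum>k<M. g (2*k) + g (2*k+1))"
  by (induction M) (simp_all add: add.assoc)

lemma cover_union:
  assumes "sa \<in> cover_sums A" "sb \<in> cover_sums B" shows "sa + sb \<in> cover_sums (A \<union> B)"
proof -
  obtain SA :: "nat \<Rightarrow> lc set" where SA: "\<forall>n. is_lc_interval (SA n)" "A \<subseteq> (\<Union>n. SA n)" "null (\<lambda>n. lc_len (SA n))"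
     "sa = gsum (\<lambda>n. lc_len (SA n))" using assms(1) unfolding cover_sums_iff
     by blast
  obtain SB :: "nat \<Rightarrow> lc set" where SB: "\<forall>n. is_lc_interval (SB n)" "B \<subseteq> (\<Union>n. SB n)" "null (\<lambda>n. lc_len (SB n))"
     "sb = gsum (\<lambda>n. lc_len (SB n))" using assms(2) unfolding cover_sums_iff
     by blast
  define C where "C = (\<lambda>j. if even j then SA (j div 2) else SB (j div 2))"
  define la where "la = (\<lambda>n. lc_len (SA n))"
  define lb where "lb = (\<lambda>n. lc_len (SB n))"
  have lC: "(\<lambda>j. lc_len (C j)) = (\<lambda>j. if even j then la (j div 2) else lb (j div 2))"
    by (auto simp: C_def la_def lb_def)
  have int: "\<forall>n. is_lc_interval (C n)" using SA(1) SB(1) by (simp add: C_def)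
  have cv: "A \<union> B \<subseteq> (\<Union>n. C n)"
  proof
    fix x assume x: "x \<in> A \<union> B"
    show "x \<in> (\<Union>n. C n)"
    proof (cases "x \<in> A")
      case True
      then obtain k where k: "x \<in> SA k" using SA(2) by blast
      have "C (2*k) = SA k" by (simp add: C_def)
      then have "x \<in> C (2*k)" using k by simp
      then show ?thesis by (rule UN_I[OF UNIV_I])
    next
      case False
      then have "x \<in> B" using x by simp
      then obtain k where k: "x \<in> SB k" using SB(2) by blast
      have "C (2*k+1) = SB k" by (simp add: C_def)
      then have "x \<in> C (2*k+1)" using k by simp
      then show ?thesis by (rule UN_I[OF UNIV_I])
    qed
  qed
  have nC: "null (\<lambda>j. lc_len (C j))" unfolding lC null_def
  proof
    fix q
    have "{j. \<not> vb (if even j then la (j div 2) else lb (j div 2)) q}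
      \<subseteq> (\<lambda>k. 2*k) ` {k. \<not> vb (la k) q} \<union> (\<lambda>k. 2*k+1) ` {k. \<not> vb (lb k) q}"
    proof
      fix j assume j: "j \<in> {j. \<not> vb (if even j then la (j div 2) else lb (j div 2)) q}"
      show "j \<in> (\<lambda>k. 2*k) ` {k. \<not> vb (la k) q} \<union> (\<lambda>k. 2*k+1) ` {k. \<not> vb (lb k) q}"
      proof (cases "even j")
        case True
        then have e: "j = 2 * (j div 2)" by simp
        have "j div 2 \<in> {k. \<not> vb (la k) q}" using j True by simp
        then have "j \<in> (\<lambda>k. 2*k) ` {k. \<not> vb (la k) q}" by (rule image_eqI[where f="\<lambda>k. 2*k", OF e])
        then show ?thesis by (rule UnI1)
      next
        case False
        then have e: "j = 2 * (j div 2) + 1" by simp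
        have "j div 2 \<in> {k. \<not> vb (lb k) q}" using j False by simp
        then have "j \<in> (\<lambda>k. 2*k+1) ` {k. \<not> vb (lb k) q}" by (rule image_eqI[where f="\<lambda>k. 2*k+1", OF e])
        then show ?thesis by (rule UnI2)
      qed
    qed
    moreover have "finite ((\<lambda>k. 2*k) ` {k. \<not> vb (la k) q} \<union> (\<lambda>k. 2*k+1) ` {k. \<not> vb (lb k) q})"
      using SA(3) SB(3) by (simp add: null_def la_def lb_def)
    ultimately show "finite {j. \<not> vb (if even j then la (j div 2) else lb (j div 2)) q}"
      by (rule finite_subset)
  qed
  have na: "null la" and nb: "null lb" using SA(3) SB(3) by (simp_all add: la_def lb_def)
  have g: "gsum (\<lambda>j. lc_len (C j)) = sa + sb"
  proof (rule lc_eq)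
    fix p
    obtain M1 where M1: "\<forall>n\<in>{k. Rep_lc (la k) p \<noteq> 0}. n < M1"
      using finite_nat_set_iff_bounded[THEN iffD1, OF supp_fin[OF na]] by blast
    obtain M2 where M2: "\<forall>n\<in>{k. Rep_lc (lb k) p \<noteq> 0}. n < M2"
      using finite_nat_set_iff_bounded[THEN iffD1, OF supp_fin[OF nb]] by blast
    define M where "M = max M1 M2"
    have sa: "{k. Rep_lc (la k) p \<noteq> 0} \<subseteq> {..<M}" using M1 by (auto simp: M_def)
    have sb: "{k. Rep_lc (lb k) p \<noteq> 0} \<subseteq> {..<M}" using M2 by (auto simp: M_def)
    have sc: "{j. Rep_lc (lc_len (C j)) p \<noteq> 0} \<subseteq> {..<2*M}"
    proof
      fix j assume j: "j \<in> {j. Rep_lc (lc_len (C j)) p \<noteq> 0}"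
      have "j div 2 < M"
      proof (cases "even j")
        case True
        then have "Rep_lc (la (j div 2)) p \<noteq> 0" using j by (simp add: C_def la_def)
        then show ?thesis using sa by blast
      next
        case False
        then have "Rep_lc (lb (j div 2)) p \<noteq> 0" using j by (simp add: C_def lb_def)
        then show ?thesis using sb by blast
      qed
      then show "j \<in> {..<2*M}" by (simp add: div_less_iff_less_mult mult.commute)
    qed
    have "Rep_lc (gsum (\<lambda>j. lc_len (C j))) p = (\<Sum>j<2*M. Rep_lc (lc_len (C j)) p)"
      by (rule Rep_gsum[OF nC finite_lessThan sc])
    also have "\<dots> = (\<Sum>k<M. Rep_lc (la k) p + Rep_lc (lb k) p)"
      by (subst sum_interleave) (simp add: C_def la_def lb_def)
    also have "\<dots> = Rep_lc (gsum la) p + Rep_lc (gsum lb) p"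
      by (simp add: sum.distrib Rep_gsum[OF na finite_lessThan sa] Rep_gsum[OF nb finite_lessThan sb])
    finally show "Rep_lc (gsum (\<lambda>j. lc_len (C j))) p = Rep_lc (sa + sb) p"
      by (simp add: Rep_plus SA(4) SB(4) la_def lb_def)
  qed
  show ?thesis unfolding cover_sums_iff
    by (intro exI[of _ C] conjI int cv nC g[symmetric])
qed

definition endp :: "lc set \<Rightarrow> lc \<Rightarrow> lc \<Rightarrow> bool" where
  "endp S a b \<longleftrightarrow> a < b \<and> (\<forall>x. a < x \<and> x < b \<longrightarrow> x \<in> S) \<and> (\<forall>x\<in>S. a \<le> x \<and> x \<le> b) \<and> lc_len S = b - a"

lemma endp_fun:
  assumes "\<forall>n::nat. is_lc_interval (S n)"
  shows "\<exists>a b. \<forall>n. endp (S n) (a n) (b n)"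
proof -
  have "\<forall>n. \<exists>ab. endp (S n) (fst ab) (snd ab)"
  proof
    fix n
    obtain a b where "endp (S n) a b" using is_interval_props[of "S n"] assms by (auto simp: endp_def)
    then show "\<exists>ab. endp (S n) (fst ab) (snd ab)" by (intro exI[of _ "(a, b)"]) simp
  qed
  then have "\<exists>f. \<forall>n. endp (S n) (fst (f n)) (snd (f n))" by (rule choice)
  then obtain f :: "nat \<Rightarrow> lc \<times> lc" where f: "\<forall>n. endp (S n) (fst (f n)) (snd (f n))" by blast
  show ?thesis by (intro exI[of _ "\<lambda>n. fst (f n)"] exI[of _ "\<lambda>n. snd (f n)"]) (rule f)
qed

lemma disj_order:
  assumes "endp I c d" "endp I' c' d'" "I \<inter> I' = {}"
  shows "d \<le> c' \<or> d' \<le> c"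
proof (rule ccontr)
  assume "\<not> (d \<le> c' \<or> d' \<le> c)"
  then have "c' < d" "c < d'" by auto
  moreover have "c < d" "c' < d'" using assms(1,2) by (auto simp: endp_def)
  ultimately have "max c c' < min d d'" by simp
  then obtain x where x: "max c c' < x" "x < min d d'" using dense_lc by blast
  then have "x \<in> I" "x \<in> I'" using assms(1,2) by (auto simp: endp_def)
  then show False using assms(3) by blast
qed

lemma ilen_le1: assumes "a < b" shows "ilen a b c d \<le> b - a"
proof -
  have "min b d - max a c \<le> b - a" by (rule diff_mono) simp_all
  moreover have "0 \<le> b - a" using assms by simp
  ultimately show ?thesis unfolding ilen_def by (rule max.boundedI[rotated])
qed

lemma ilen_le2: assumes "c < d" shows "ilen a b c d \<le> d - c"
proof -
  have "min b d - max a c \<le> d - c" by (rule diff_mono) simp_all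
  moreover have "0 \<le> d - c" using assms by simp
  ultimately show ?thesis unfolding ilen_def by (rule max.boundedI[rotated])
qed

lemma ilen_ge: "0 \<le> ilen a b c d" by (simp add: ilen_def)

theorem proposition3p4:
  fixes I :: "nat \<Rightarrow> lc set" and A B :: "lc set"
  assumes "\<And>n. is_lc_interval (I n)"
    and "\<And>m n. m \<noteq> n \<Longrightarrow> I m \<inter> I n = {}"
    and "lc_tendsto (\<lambda>n. lc_len (I n)) 0"
    and "outer_measurable A" and "outer_measurable B"
    and "A \<subseteq> (\<Union>n. I n)" and "B \<subseteq> UNIV - (\<Union>n. I n)"
  shows "outer_measurable (A \<union> B) \<and> Mu (A \<union> B) = Mu A + Mu B"
proof -
  obtain cI dI :: "nat \<Rightarrow> lc" where cd: "\<forall>n. endp (I n) (cI n) (dI n)"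
    using endp_fun[of I] assms(1) by blast
  have cdlt: "\<forall>n. cI n < dI n" using cd by (simp add: endp_def)
  have ord: "\<forall>n. \<forall>n'. n \<noteq> n' \<longrightarrow> dI n \<le> cI n' \<or> dI n' \<le> cI n"
    using disj_order cd assms(2) by blast
  have lenI: "\<And>n. lc_len (I n) = dI n - cI n" using cd by (simp add: endp_def)
  have nI: "null (\<lambda>n. dI n - cI n)"
  proof -
    have "\<forall>q. \<exists>N. \<forall>n\<ge>N. vb (lc_len (I n)) q" using assms(3) by (simp add: tendsto_iff)
    then have "\<forall>q. \<exists>N. \<forall>n\<ge>N. vb (dI n - cI n) q" by (simp add: lenI)
    then show ?thesis using null_nat[of "\<lambda>n. dI n - cI n"] by simp
  qed
  define m where "m = Mu A + Mu B"
  have lower: "\<forall>s\<in>cover_sums (A \<union> B). m \<le> s"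
  proof
    fix s assume "s \<in> cover_sums (A \<union> B)"
    then obtain S :: "nat \<Rightarrow> lc set" where S: "\<forall>n. is_lc_interval (S n)" "A \<union> B \<subseteq> (\<Union>n. S n)"
      "null (\<lambda>n. lc_len (S n))" "s = gsum (\<lambda>n. lc_len (S n))"
      unfolding cover_sums_iff by blast
    obtain a b :: "nat \<Rightarrow> lc" where ab: "\<forall>k. endp (S k) (a k) (b k)" using endp_fun[OF S(1)] by blast
    have ablt: "\<And>k. a k < b k" using ab by (simp add: endp_def)
    define l where "l = (\<lambda>k. b k - a k)"
    have lS: "(\<lambda>n. lc_len (S n)) = l" using ab by (auto simp: l_def endp_def)
    have nl: "null l" using S(3) lS by simp
    have sl: "s = gsum l" using S(4) lS by simp
    define lam :: "nat \<times> nat \<Rightarrow> lc" where "lam = (\<lambda>ki. ilen (a (fst ki)) (b (fst ki)) (cI (snd ki)) (dI (snd ki)))"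
    have lam_ge: "\<And>ki. 0 \<le> lam ki" by (simp add: lam_def ilen_ge)
    have lam_leS: "\<And>ki. lam ki \<le> l (fst ki)" by (simp add: lam_def l_def ilen_le1 ablt)
    have lam_leI: "\<And>ki. lam ki \<le> dI (snd ki) - cI (snd ki)" by (simp add: lam_def ilen_le2 cdlt)
    have nlam: "null lam" unfolding null_def
    proof
      fix q
      have "{ki. \<not> vb (lam ki) q} \<subseteq> {k. \<not> vb (l k) q} \<times> {n. \<not> vb (dI n - cI n) q}"
      proof
        fix ki assume ki: "ki \<in> {ki. \<not> vb (lam ki) q}"
        have "\<not> vb (l (fst ki)) q" using vb_mono[OF lam_ge lam_leS] ki by blast
        moreover have "\<not> vb (dI (snd ki) - cI (snd ki)) q" using vb_mono[OF lam_ge lam_leI] ki by blast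
        ultimately show "ki \<in> {k. \<not> vb (l k) q} \<times> {n. \<not> vb (dI n - cI n) q}" by (simp add: mem_Times_iff)
      qed
      moreover have "finite ({k. \<not> vb (l k) q} \<times> {n. \<not> vb (dI n - cI n) q})"
        using nl nI by (simp add: null_def)
      ultimately show "finite {ki. \<not> vb (lam ki) q}" by (rule finite_subset)
    qed
    define T where "T = gsum lam"
    define gN where "gN = (\<lambda>N ki. if snd ki < N then lam ki else 0)"
    have gN_ge: "\<And>N ki. 0 \<le> gN N ki" by (simp add: gN_def lam_ge)
    have gN_le: "\<And>N ki. gN N ki \<le> lam ki" by (simp add: gN_def lam_ge)
    have ngN: "\<And>N. null (gN N)" by (rule null_le[OF gN_ge gN_le nlam])
    define G where "G = (\<lambda>N. gsum (gN N))"

    have claimA: "Mu A \<le> T + \<rho>" if rho: "0 < \<rho>" for \<rho>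
    proof -
      obtain e :: "nat \<times> nat \<Rightarrow> lc" where e: "\<forall>i. 0 < e i" "null e" "gsum e < \<rho>"
        using pad_exists[OF rho] by blast
      define P :: "nat \<times> nat \<Rightarrow> lc \<times> lc" where
        "P = (\<lambda>ki. (max (a (fst ki)) (cI (snd ki)), min (b (fst ki)) (dI (snd ki))))"
      have lenP: "(\<lambda>i. len0 (P i)) = lam" by (rule ext) (simp add: P_def len0_def lam_def ilen_def)
      have cov: "\<exists>i. fst (P i) \<le> x \<and> x \<le> snd (P i)" if x: "x \<in> A" for x
      proof -
        obtain k where k: "x \<in> S k" using x S(2) by blast
        obtain n where n: "x \<in> I n" using x assms(6) by blast
        have "a k \<le> x" "x \<le> b k" using ab k by (auto simp: endp_def)
        moreover have "cI n \<le> x" "x \<le> dI n" using cd n by (auto simp: endp_def)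
        ultimately have "fst (P (k, n)) \<le> x \<and> x \<le> snd (P (k, n))" by (simp add: P_def)
        then show ?thesis by blast
      qed
      have nP: "null (\<lambda>i. len0 (P i))" using nlam lenP by simp
      obtain s' where s': "s' \<in> cover_sums A" "s' \<le> gsum (\<lambda>i. len0 (P i)) + gsum e"
        using cover_from_pieces[OF _ e(2) nP cov] e(1) by blast
      have "Mu A \<le> s'" by (rule Mu_le[OF assms(4) s'(1)])
      also have "\<dots> \<le> T + gsum e" using s'(2) lenP by (simp add: T_def)
      also have "\<dots> \<le> T + \<rho>" using e(3) by simp
      finally show ?thesis .
    qed

    have claimB: "Mu B \<le> s - G N + \<rho>" if rho: "0 < \<rho>" for N \<rho>
    proof -
      obtain e :: "nat \<times> nat \<Rightarrow> lc" where e: "\<forall>i. 0 < e i" "null e" "gsum e < \<rho>"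
        using pad_exists[OF rho] by blast
      have finN: "finite {..<N}" by simp
      have "\<forall>k. \<exists>ps. length ps = card {..<N} + 1 \<and>
         (\<forall>x. a k \<le> x \<and> x \<le> b k \<and> (\<forall>n\<in>{..<N}. \<not> (cI n < x \<and> x < dI n)) \<longrightarrow> (\<exists>pr\<in>set ps. fst pr \<le> x \<and> x \<le> snd pr)) \<and>
         sum_list (map len0 ps) = len0 (a k, b k) - (\<Sum>n\<in>{..<N}. ilen (a k) (b k) (cI n) (dI n))"
      proof
        fix k show "\<exists>ps. length ps = card {..<N} + 1 \<and>
         (\<forall>x. a k \<le> x \<and> x \<le> b k \<and> (\<forall>n\<in>{..<N}. \<not> (cI n < x \<and> x < dI n)) \<longrightarrow> (\<exists>pr\<in>set ps. fst pr \<le> x \<and> x \<le> snd pr)) \<and>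
         sum_list (map len0 ps) = len0 (a k, b k) - (\<Sum>n\<in>{..<N}. ilen (a k) (b k) (cI n) (dI n))"
          by (rule gaps[OF finN]) (use cdlt ord in auto)
      qed
      then have "\<exists>ps. \<forall>k. length (ps k) = card {..<N} + 1 \<and>
         (\<forall>x. a k \<le> x \<and> x \<le> b k \<and> (\<forall>n\<in>{..<N}. \<not> (cI n < x \<and> x < dI n)) \<longrightarrow> (\<exists>pr\<in>set (ps k). fst pr \<le> x \<and> x \<le> snd pr)) \<and>
         sum_list (map len0 (ps k)) = len0 (a k, b k) - (\<Sum>n\<in>{..<N}. ilen (a k) (b k) (cI n) (dI n))"
        by (rule choice)
      then obtain ps :: "nat \<Rightarrow> (lc \<times> lc) list" where ps: "\<forall>k. length (ps k) = card {..<N} + 1 \<and>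
         (\<forall>x. a k \<le> x \<and> x \<le> b k \<and> (\<forall>n\<in>{..<N}. \<not> (cI n < x \<and> x < dI n)) \<longrightarrow> (\<exists>pr\<in>set (ps k). fst pr \<le> x \<and> x \<le> snd pr)) \<and>
         sum_list (map len0 (ps k)) = len0 (a k, b k) - (\<Sum>n\<in>{..<N}. ilen (a k) (b k) (cI n) (dI n))"
        by blast
      have psl: "\<And>k. length (ps k) = N + 1" using ps by simp
      have pscov: "\<And>k x. a k \<le> x \<Longrightarrow> x \<le> b k \<Longrightarrow> (\<forall>n\<in>{..<N}. \<not> (cI n < x \<and> x < dI n)) \<Longrightarrow> (\<exists>pr\<in>set (ps k). fst pr \<le> x \<and> x \<le> snd pr)"
        using ps by blast
      have lk: "\<And>k. len0 (a k, b k) = l k" using ablt by (simp add: len0_def l_def less_imp_le)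
      have pssum: "\<And>k. sum_list (map len0 (ps k)) = l k - (\<Sum>n<N. lam (k, n))"
        using ps lk by (simp add: lam_def)
      define Q :: "nat \<times> nat \<Rightarrow> lc \<times> lc" where
        "Q = (\<lambda>ki. if snd ki < N + 1 then ps (fst ki) ! (snd ki) else (a (fst ki), a (fst ki)))"
      have len0_ge: "\<And>pr. 0 \<le> len0 pr" by (simp add: len0_def)
      have psle: "len0 (ps k ! i) \<le> l k" if "i < N + 1" for k i
      proof -
        have "ps k ! i \<in> set (ps k)" using that psl[of k] by (intro nth_mem) simp
        then have "len0 (ps k ! i) \<in> set (map len0 (ps k))" by simp
        then have "len0 (ps k ! i) \<le> sum_list (map len0 (ps k))"
          by (rule member_le_sum_list) (auto simp: len0_ge)
        also have "\<dots> \<le> l k" unfolding pssum using sum_nonneg[of "{..<N}" "\<lambda>n. lam (k, n)"] lam_ge by simp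
        finally show ?thesis .
      qed
      have Qz: "\<And>k i. i \<notin> {..<N+1} \<Longrightarrow> len0 (Q (k, i)) = 0" by (simp add: Q_def len0_def)
      have nQ: "null (\<lambda>ki. len0 (Q ki))" unfolding null_def
      proof
        fix q
        have "{ki. \<not> vb (len0 (Q ki)) q} \<subseteq> {k. \<not> vb (l k) q} \<times> {..<N+1}"
        proof
          fix ki assume ki: "ki \<in> {ki. \<not> vb (len0 (Q ki)) q}"
          obtain k i where kie: "ki = (k, i)" by force
          have "i < N + 1"
          proof (rule ccontr)
            assume "\<not> i < N + 1"
            then have "len0 (Q ki) = 0" using Qz kie by simp
            then show False using ki vb_zero by simp
          qed
          then have "len0 (Q ki) \<le> l k" using psle kie by (simp add: Q_def)
          then have "\<not> vb (l k) q" using vb_mono[OF len0_ge] ki by blast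
          then show "ki \<in> {k. \<not> vb (l k) q} \<times> {..<N+1}" using kie \<open>i < N + 1\<close> by simp
        qed
        moreover have "finite ({k. \<not> vb (l k) q} \<times> {..<N+1})" using nl by (simp add: null_def)
        ultimately show "finite {ki. \<not> vb (len0 (Q ki)) q}" by (rule finite_subset)
      qed
      have cov: "\<exists>i. fst (Q i) \<le> x \<and> x \<le> snd (Q i)" if x: "x \<in> B" for x
      proof -
        obtain k where k: "x \<in> S k" using x S(2) by blast
        have "a k \<le> x" "x \<le> b k" using ab k by (auto simp: endp_def)
        moreover have "\<forall>n\<in>{..<N}. \<not> (cI n < x \<and> x < dI n)"
        proof (intro ballI notI)
          fix n assume "cI n < x \<and> x < dI n"
          then have "x \<in> I n" using cd by (simp add: endp_def)
          then show False using x assms(7) by blast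
        qed
        ultimately obtain pr where pr: "pr \<in> set (ps k)" "fst pr \<le> x" "x \<le> snd pr" using pscov by blast
        then obtain i where i: "i < length (ps k)" "ps k ! i = pr" by (auto simp: in_set_conv_nth)
        then have "Q (k, i) = pr" using psl by (simp add: Q_def)
        then show ?thesis using pr by blast
      qed
      obtain s' where s': "s' \<in> cover_sums B" "s' \<le> gsum (\<lambda>i. len0 (Q i)) + gsum e"
        using cover_from_pieces[OF _ e(2) nQ cov] e(1) by blast
      have "gsum (\<lambda>i. len0 (Q i)) = s - G N"
      proof -
        have h1: "(\<lambda>(k, i). len0 (Q (k, i))) = (\<lambda>ki. len0 (Q ki))" by auto
        have g1: "null (\<lambda>k. \<Sum>i\<in>{..<N+1}. len0 (Q (k, i))) \<and>
            gsum (\<lambda>k. \<Sum>i\<in>{..<N+1}. len0 (Q (k, i))) = gsum (\<lambda>(k, i). len0 (Q (k, i)))"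
          by (rule gsum_inner) (use nQ h1 Qz in auto)
        have inner: "(\<Sum>i\<in>{..<N+1}. len0 (Q (k, i))) = l k - (\<Sum>n\<in>{..<N}. gN N (k, n))" for k
        proof -
          have "(\<Sum>i\<in>{..<N+1}. len0 (Q (k, i))) = (\<Sum>i\<in>{..<N+1}. len0 (ps k ! i))"
            by (rule sum.cong) (simp_all add: Q_def)
          also have "\<dots> = sum_list (map len0 (ps k))"
            using psl[of k] by (simp add: sum_list_sum_nth atLeast0LessThan)
          also have "\<dots> = l k - (\<Sum>n\<in>{..<N}. gN N (k, n))" using pssum by (simp add: gN_def)
          finally show ?thesis .
        qed
        have h2: "(\<lambda>(k, n). if n \<in> {..<N} then gN N (k, n) else 0) = gN N" by (auto simp: gN_def)
        have g2: "null (\<lambda>k. \<Sum>n\<in>{..<N}. (if n \<in> {..<N} then gN N (k, n) else 0)) \<and>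
            gsum (\<lambda>k. \<Sum>n\<in>{..<N}. (if n \<in> {..<N} then gN N (k, n) else 0)) =
            gsum (\<lambda>(k, n). if n \<in> {..<N} then gN N (k, n) else 0)"
          by (rule gsum_inner) (use ngN h2 in auto)
        have h3: "(\<lambda>k. \<Sum>n\<in>{..<N}. (if n \<in> {..<N} then gN N (k, n) else 0)) = (\<lambda>k. \<Sum>n\<in>{..<N}. gN N (k, n))"
          by simp
        have nR: "null (\<lambda>k. \<Sum>n\<in>{..<N}. gN N (k, n))" and gR: "gsum (\<lambda>k. \<Sum>n\<in>{..<N}. gN N (k, n)) = G N"
          using g2 h2 h3 by (simp_all add: G_def)
        have "gsum (\<lambda>i. len0 (Q i)) = gsum (\<lambda>k. \<Sum>i\<in>{..<N+1}. len0 (Q (k, i)))" using g1 h1 by simp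
        also have "\<dots> = gsum (\<lambda>k. l k - (\<Sum>n\<in>{..<N}. gN N (k, n)))" by (simp only: inner)
        also have "\<dots> = gsum l - G N" by (simp add: gsum_diff[OF nl nR] gR)
        finally show ?thesis using sl by simp
      qed
      have "Mu B \<le> s'" by (rule Mu_le[OF assms(5) s'(1)])
      also have "\<dots> \<le> s - G N + gsum e" using s'(2) \<open>gsum (\<lambda>i. len0 (Q i)) = s - G N\<close> by simp
      also have "\<dots> \<le> s - G N + \<rho>" using e(3) by simp
      finally show ?thesis .
    qed

    have tail: "\<exists>N. T - G N < \<delta>" if del: "0 < \<delta>" for \<delta>
    proof -
      obtain q where q: "\<forall>g. vb g q \<longrightarrow> 0 < \<delta> - g" using pert[OF del] by blast
      obtain N where N: "\<forall>n\<ge>N. vb (dI n - cI n) q" using null_nat[THEN iffD1, OF nI] by blast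
      have "T - G N = gsum (\<lambda>ki. lam ki - gN N ki)" by (simp add: T_def G_def gsum_diff[OF nlam ngN])
      moreover have "vb (gsum (\<lambda>ki. lam ki - gN N ki)) q"
      proof (rule gsum_vb)
        show "null (\<lambda>ki. lam ki - gN N ki)" by (rule null_diff[OF nlam ngN])
        fix ki :: "nat \<times> nat"
        show "vb (lam ki - gN N ki) q"
        proof (cases "snd ki < N")
          case True then show ?thesis by (simp add: gN_def vb_zero)
        next
          case False
          then have "vb (dI (snd ki) - cI (snd ki)) q" using N by simp
          then have "vb (lam ki) q" using vb_mono[OF lam_ge lam_leI] by blast
          then show ?thesis using False by (simp add: gN_def)
        qed
      qed
      ultimately have "0 < \<delta> - (T - G N)" using q by simp
      then show ?thesis by auto
    qed

    show "m \<le> s" unfolding m_def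
    proof (rule le_eps)
      fix \<rho> :: lc assume "0 < \<rho>"
      define r where "r = half (half \<rho>)"
      have r: "0 < r" using half_pos \<open>0 < \<rho>\<close> by (simp add: r_def)
      have rr: "r + r = half \<rho>" by (simp add: r_def half_half)
      have r4: "(r + r) + (r + r) = \<rho>" by (simp add: rr half_half)
      obtain N where N: "T - G N < r" using tail[OF r] by blast
      have "Mu A + Mu B \<le> (T + r) + (s - G N + r)" by (rule add_mono[OF claimA[OF r] claimB[OF r]])
      also have "\<dots> = s + (T - G N) + (r + r)" by (simp add: algebra_simps)
      also have "\<dots> \<le> s + r + (r + r)" using N by simp
      also have "\<dots> \<le> s + (r + r) + (r + r)" using r by (simp add: add.assoc)
      also have "\<dots> = s + \<rho>" using r4 by (simp add: add.assoc)
      finally show "Mu A + Mu B \<le> s + \<rho>" .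
    qed
  qed
  have upper: "m' \<le> m" if h: "\<forall>s\<in>cover_sums (A \<union> B). m' \<le> s" for m'
  proof -
    have "\<forall>sb\<in>cover_sums B. m' - Mu A \<le> sb"
    proof
      fix sb assume sb: "sb \<in> cover_sums B"
      have "\<forall>sa\<in>cover_sums A. m' - sb \<le> sa"
      proof
        fix sa assume "sa \<in> cover_sums A"
        then have "m' \<le> sa + sb" using h cover_union sb by blast
        then show "m' - sb \<le> sa" by (simp add: diff_le_eq)
      qed
      then have "m' - sb \<le> Mu A" by (rule Mu_glb[OF assms(4)])
      then show "m' - Mu A \<le> sb" by (simp add: diff_le_eq add.commute)
    qed
    then have "m' - Mu A \<le> Mu B" by (rule Mu_glb[OF assms(5)])
    then show "m' \<le> m" by (simp add: m_def diff_le_eq add.commute)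
  qed
  have inf: "lc_is_inf (cover_sums (A \<union> B)) m"
    unfolding lc_is_inf_def using lower upper by blast
  then have om: "outer_measurable (A \<union> B)" by (auto simp: outer_measurable_def)
  have "Mu (A \<union> B) = m" using Mu_inf[OF om] inf inf_unique by blast
  then show ?thesis using om by (simp add: m_def)
qed

end
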